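(* Let $n,p\ge 1$ be integers, let $q\in(0,\infty]$, and let $0\le \sigma\le B$. Then \[ \mathcal{E}_q^*(\sigma,B)\;\le\;\mathcal{E}_q(\sigma,B)\;\le\;16\,\mathcal{E}_q^*(\sigma,B). \]
   Context: For independent random vectors $\boldsymbol{X}_1,\dots,\boldsymbol{X}_n$ in $\mathbb{R}^p$ with joint law $P^n=\prod_{i=1}^n P_i$ and $\mathbb{E}[\boldsymbol{X}_i]=0$ for all $i$, write $X_i(j)$ for the $j$-th coordinate and set $\mathcal{V}(P^n)=\max_{1\le j\le p}\frac1n\sum_{i=1}^n\mathbb{E}[X_i(j)^2]$ and $\mathcal{D}_q(P^n)=\big(\frac1n\sum_{i=1}^n\mathbb{E}[\max_{1\le j\le p}|X_i(j)|^q]\big)^{1/q}$. For $q=\infty$, the constraint $\mathcal{D}_q(P^n)\le B$ means $\mathbb{P}(\max_{1\le i\le n}\|\boldsymbol{X}_i\|_\infty> B)=0$. Define \[ \mathcal{E}_q(\sigma,B)=\sup\Big\{\mathbb{E}_{P^n}\Big[\max_{1\le j\le p}\Big|\frac1n\sum_{i=1}^n X_i(j)\Big|\Big]:\ \mathcal{V}(P^n)\le\sigma^2,\ \mathcal{D}_q(P^n)\le B\Big\}, \] the supremum over all such laws of independent mean-zero random vectors. Let $\mathcal{P}_q(\sigma,B)$ be the set of probability distributions $P$ on $\mathbb{R}^p$ with $\mathbb{E}_P[\boldsymbol{X}]=0$, $\max_{1\le j\le p}\mathbb{E}_P[X(j)^2]\le\sigma^2$ and $(\mathbb{E}_P[\|\boldsymbol{X}\|_\infty^q])^{1/q}\le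 B$, and \[ \mathcal{E}_q^*(\sigma,B)=\sup\Big\{\mathbb{E}_P\Big[\Big\|\frac1n\sum_{i=1}^n\boldsymbol{X}_i\Big\|_\infty\Big]:\ \boldsymbol{X}_1,\dots,\boldsymbol{X}_n\overset{iid}{\sim}P,\ P\in\mathcal{P}_q(\sigma,B)\Big\}. \] *)

theory Defs
  imports "HOL-Probability.Probability"
begin

text \<open>Vectors in R^p are rendered as \<open>real ^ 'p::finite\<close> for a finite index type \<open>'p\<close>
  (so p = CARD('p) \<ge> 1). The parameter q \<in> (0,\<infinity>] is an extended real.\<close>

definition linf :: "real ^ 'p::finite \<Rightarrow> real" where
  "linf x = Max (range (\<lambda>j. \<bar>x $ j\<bar>))"

definition mean_zero :: "(real ^ 'p::finite) measure \<Rightarrow> bool" where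
  "mean_zero P \<longleftrightarrow> (\<forall>j. integrable P (\<lambda>x. x $ j) \<and> (\<integral>x. x $ j \<partial>P) = 0)"

definition is_law :: "(real ^ 'p::finite) measure \<Rightarrow> bool" where
  "is_law P \<longleftrightarrow> prob_space P \<and> sets P = sets borel"

definition V_ok :: "real \<Rightarrow> nat \<Rightarrow> (nat \<Rightarrow> (real ^ 'p::finite) measure) \<Rightarrow> bool" where
  "V_ok \<sigma> n Ps \<longleftrightarrow> (\<forall>j. (\<forall>i<n. integrable (Ps i) (\<lambda>x. (x $ j)^2)) \<and>
       (1 / real n) * (\<Sum>i<n. \<integral>x. (x $ j)^2 \<partial>Ps i) \<le> \<sigma>^2)"

definition D_ok :: "ereal \<Rightarrow> real \<Rightarrow> nat \<Rightarrow> (nat \<Rightarrow> (real ^ 'p::finite) measure) \<Rightarrow> bool" where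
  "D_ok q B n Ps \<longleftrightarrow>
     (if q = \<infinity> then (AE x in PiM {..<n} Ps. \<forall>i<n. linf (x i) \<le> B)
      else (\<forall>i<n. integrable (Ps i) (\<lambda>x. linf x powr real_of_ereal q)) \<and>
           ((1 / real n) * (\<Sum>i<n. \<integral>x. linf x powr real_of_ereal q \<partial>Ps i))
              powr (1 / real_of_ereal q) \<le> B)"

definition E_q :: "'p::finite itself \<Rightarrow> nat \<Rightarrow> ereal \<Rightarrow> real \<Rightarrow> real \<Rightarrow> ennreal" where
  "E_q _ n q \<sigma> B = (SUP Ps \<in> {Ps :: nat \<Rightarrow> (real ^ 'p::finite) measure.
        (\<forall>i<n. is_law (Ps i) \<and> mean_zero (Ps i)) \<and> V_ok \<sigma> n Ps \<and> D_ok q B n Ps}.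
      \<integral>\<^sup>+ x. ennreal (Max (range (\<lambda>j. \<bar>(1 / real n) * (\<Sum>i<n. x i $ j)\<bar>))) \<partial>PiM {..<n} Ps)"

definition P_class :: "ereal \<Rightarrow> real \<Rightarrow> real \<Rightarrow> (real ^ 'p::finite) measure set" where
  "P_class q \<sigma> B = {P. is_law P \<and> mean_zero P \<and>
     (\<forall>j. integrable P (\<lambda>x. (x $ j)^2) \<and> (\<integral>x. (x $ j)^2 \<partial>P) \<le> \<sigma>^2) \<and>
     (if q = \<infinity> then (AE x in P. linf x \<le> B)
      else integrable P (\<lambda>x. linf x powr real_of_ereal q) \<and>
           (\<integral>x. linf x powr real_of_ereal q \<partial>P) powr (1 / real_of_ereal q) \<le> B)}"

definition E_q_star :: "'p::finite itself \<Rightarrow> nat \<Rightarrow> ereal \<Rightarrow> real \<Rightarrow> real \<Rightarrow> ennreal" where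
  "E_q_star _ n q \<sigma> B = (SUP P \<in> (P_class q \<sigma> B :: (real ^ 'p::finite) measure set).
      \<integral>\<^sup>+ x. ennreal (Max (range (\<lambda>j. \<bar>(1 / real n) * (\<Sum>i<n. x i $ j)\<bar>)))
        \<partial>PiM {..<n} (\<lambda>_. P))"

end

theory Submission
  imports Defs
begin

definition nrm :: "real \<Rightarrow> real ^ 'p::finite \<Rightarrow> real" where
  "nrm c v = Max (range (\<lambda>j. \<bar>c * v $ j\<bar>))"

lemma borel_measurable_Max_image:
  fixes f :: "'i \<Rightarrow> 'a \<Rightarrow> real"
  assumes "finite I" "I \<noteq> {}" "\<And>i. i \<in> I \<Longrightarrow> f i \<in> borel_measurable M"
  shows "(\<lambda>x. Max ((\<lambda>i. f i x) ` I)) \<in> borel_measurable M"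
  using assms
proof (induction I rule: finite_ne_induct)
  case (singleton x) then show ?case by simp
next
  case (insert x F)
  have "(\<lambda>y. max (f x y) (Max ((\<lambda>i. f i y) ` F))) \<in> borel_measurable M"
    using insert by (intro borel_measurable_max) auto
  moreover have "\<And>y. Max ((\<lambda>i. f i y) ` insert x F) = max (f x y) (Max ((\<lambda>i. f i y) ` F))"
    using insert by (subst image_insert, subst Max_insert) auto
  ultimately show ?case by simp
qed

lemma nrm_borel: "nrm c \<in> borel_measurable (borel :: (real^'p::finite) measure)"
proof -
  have "(\<lambda>v::real^'p. Max ((\<lambda>j. \<bar>c * v $ j\<bar>) ` UNIV)) \<in> borel_measurable borel"
    by (rule borel_measurable_Max_image) auto
  then show ?thesis unfolding nrm_def[abs_def] by simp
qed

lemma nrm_meas[measurable (raw)]: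
  "f \<in> borel_measurable M \<Longrightarrow> (\<lambda>x. nrm c (f x)) \<in> borel_measurable M"
  using measurable_compose[OF _ nrm_borel] by blast

lemma linf_nrm: "linf x = nrm 1 x"
  by (simp add: linf_def nrm_def)

lemma nrm_ge: "\<bar>c * v $ j\<bar> \<le> nrm c v"
  unfolding nrm_def by (rule Max_ge) auto

lemma nrm_nonneg: "0 \<le> nrm c v"
  using nrm_ge[of c v] abs_ge_zero order_trans by blast

lemma nrm_attained: "\<exists>j. nrm c v = \<bar>c * v $ j\<bar>"
proof -
  have "nrm c v \<in> range (\<lambda>j. \<bar>c * v $ j\<bar>)"
    unfolding nrm_def by (rule Max_in) auto
  then show ?thesis by auto
qed

lemma nrm_add: "nrm c (u + v) \<le> nrm c u + nrm c v"
proof -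
  obtain j where j: "nrm c (u + v) = \<bar>c * (u + v) $ j\<bar>" using nrm_attained by blast
  have "\<bar>c * (u + v) $ j\<bar> \<le> \<bar>c * u $ j\<bar> + \<bar>c * v $ j\<bar>"
    by (simp add: distrib_left abs_triangle_ineq)
  also have "\<dots> \<le> nrm c u + nrm c v" by (intro add_mono nrm_ge)
  finally show ?thesis using j by simp
qed

lemma nrm_sum: "finite A \<Longrightarrow> nrm c (\<Sum>a\<in>A. f a) \<le> (\<Sum>a\<in>A. nrm c (f a))"
proof (induction A rule: finite_induct)
  case empty
  show ?case by (simp add: nrm_def)
next
  case (insert x F)
  then show ?case using nrm_add[of c "f x" "sum f F"] by simp
qed

lemma nrm_scale: "nrm c (m *\<^sub>R v) = \<bar>m\<bar> * nrm c v"
proof (rule antisym)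
  obtain j where j: "nrm c (m *\<^sub>R v) = \<bar>c * (m *\<^sub>R v) $ j\<bar>" using nrm_attained by blast
  have "\<bar>c * (m *\<^sub>R v) $ j\<bar> = \<bar>m\<bar> * \<bar>c * v $ j\<bar>" by (simp add: abs_mult)
  also have "\<dots> \<le> \<bar>m\<bar> * nrm c v" by (intro mult_left_mono nrm_ge) auto
  finally show "nrm c (m *\<^sub>R v) \<le> \<bar>m\<bar> * nrm c v" using j by simp
next
  obtain j where j: "nrm c v = \<bar>c * v $ j\<bar>" using nrm_attained by blast
  have "\<bar>m\<bar> * \<bar>c * v $ j\<bar> = \<bar>c * (m *\<^sub>R v) $ j\<bar>" by (simp add: abs_mult)
  also have "\<dots> \<le> nrm c (m *\<^sub>R v)" by (rule nrm_ge)
  finally show "\<bar>m\<bar> * nrm c v \<le> nrm c (m *\<^sub>R v)" using j by simp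
qed

lemma jensen_one:
  fixes Z :: "'a \<Rightarrow> real ^ 'p::finite"
  assumes Q: "prob_space Q" and Zm: "Z \<in> borel_measurable Q"
    and int: "\<And>j. integrable Q (\<lambda>y. Z y $ j)" and z: "\<And>j. (\<integral>y. Z y $ j \<partial>Q) = 0"
  shows "ennreal (nrm c a) \<le> (\<integral>\<^sup>+ y. ennreal (nrm c (a + Z y)) \<partial>Q)"
proof -
  interpret Q: prob_space Q by fact
  obtain j where j: "nrm c a = \<bar>c * a $ j\<bar>" using nrm_attained by blast
  define h where "h y = c * (a $ j + Z y $ j)" for y
  have hi: "integrable Q h" unfolding h_def using int[of j] by auto
  have "(\<integral>y. h y \<partial>Q) = c * a $ j"
    unfolding h_def using int[of j] z[of j] by (simp add: Q.prob_space)
  then have "\<bar>c * a $ j\<bar> \<le> (\<integral>y. \<bar>h y\<bar> \<partial>Q)"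
    by (metis integral_abs_bound)
  then have "ennreal (nrm c a) \<le> ennreal (\<integral>y. \<bar>h y\<bar> \<partial>Q)" using j by simp
  also have "ennreal (\<integral>y. \<bar>h y\<bar> \<partial>Q) = (\<integral>\<^sup>+y. ennreal \<bar>h y\<bar> \<partial>Q)"
    using hi by (intro nn_integral_eq_integral[symmetric]) auto
  also have "\<dots> \<le> (\<integral>\<^sup>+ y. ennreal (nrm c (a + Z y)) \<partial>Q)"
  proof (intro nn_integral_mono ennreal_leI)
    fix y show "\<bar>h y\<bar> \<le> nrm c (a + Z y)"
      using nrm_ge[of c "a + Z y" j] by (simp add: h_def)
  qed
  finally show ?thesis .
qed


lemma meas_sum_comp:
  fixes M :: "'i \<Rightarrow> (real ^ 'p::finite) measure"
  assumes "\<And>i. sets (M i) = sets borel" "J \<subseteq> I"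
  shows "(\<lambda>x. \<Sum>i\<in>J. x i) \<in> borel_measurable (PiM I M)"
proof (rule borel_measurable_sum)
  fix i assume "i \<in> J"
  then have "(\<lambda>x. x i) \<in> measurable (PiM I M) (M i)"
    using assms by (intro measurable_component_singleton) auto
  then show "(\<lambda>x. x i) \<in> borel_measurable (PiM I M)"
    using assms(1) measurable_cong_sets by blast
qed

lemma comp_integrable:
  fixes M :: "'i \<Rightarrow> (real ^ 'p::finite) measure"
  assumes M: "\<And>i. prob_space (M i)" "\<And>i. sets (M i) = sets borel"
    and i: "i \<in> L" and mz: "mean_zero (M i)"
  shows "integrable (PiM L M) (\<lambda>y. y i $ j) \<and> (\<integral>y. y i $ j \<partial>PiM L M) = 0"
proof -
  have d: "distr (PiM L M) (M i) (\<lambda>\<omega>. \<omega> i) = M i"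
    using M i by (intro distr_PiM_component) auto
  have m1: "(\<lambda>\<omega>. \<omega> i) \<in> measurable (PiM L M) (M i)"
    using i by (intro measurable_component_singleton)
  have m2: "(\<lambda>x. x $ j) \<in> borel_measurable (M i)"
    by (subst measurable_cong_sets[OF M(2) refl]) measurable
  have "integrable (M i) (\<lambda>x. x $ j)" "(\<integral>x. x $ j \<partial>M i) = 0"
    using mz unfolding mean_zero_def by auto
  then show ?thesis
    using integrable_distr_eq[OF m1 m2] integral_distr[OF m1 m2] d by simp
qed

lemma drop_lemma:
  fixes M :: "'i \<Rightarrow> (real ^ 'p::finite) measure"
  assumes M: "\<And>i. prob_space (M i)" "\<And>i. sets (M i) = sets borel"
    and I: "finite I" "J \<subseteq> I" and mz: "\<And>i. i \<in> I - J \<Longrightarrow> mean_zero (M i)"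
  shows "(\<integral>\<^sup>+x. ennreal (nrm c (\<Sum>i\<in>J. x i)) \<partial>PiM I M) \<le> (\<integral>\<^sup>+x. ennreal (nrm c (\<Sum>i\<in>I. x i)) \<partial>PiM I M)"
proof -
  interpret product_sigma_finite M
    using M by (simp add: product_sigma_finite_def prob_space_imp_sigma_finite)
  define L where "L = I - J"
  have IJL: "I = J \<union> L" "J \<inter> L = {}" "finite J" "finite L"
    using I unfolding L_def by (auto intro: finite_subset)
  interpret QL: prob_space "PiM L M" using M by (intro prob_space_PiM) auto
  have f1: "(\<lambda>x. ennreal (nrm c (\<Sum>i\<in>J. x i))) \<in> borel_measurable (PiM (J \<union> L) M)"
    using meas_sum_comp[of M J "J \<union> L"] M(2) by measurable
  have f2: "(\<lambda>x. ennreal (nrm c (\<Sum>i\<in>J \<union> L. x i))) \<in> borel_measurable (PiM (J \<union> L) M)"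
    using meas_sum_comp[of M "J \<union> L" "J \<union> L"] M(2) by measurable
  have "(\<integral>\<^sup>+x. ennreal (nrm c (\<Sum>i\<in>J. x i)) \<partial>PiM I M)
      = (\<integral>\<^sup>+x. (\<integral>\<^sup>+y. ennreal (nrm c (\<Sum>i\<in>J. merge J L (x, y) i)) \<partial>PiM L M) \<partial>PiM J M)"
    unfolding IJL(1) by (rule product_nn_integral_fold[OF IJL(2-4) f1])
  also have "\<dots> = (\<integral>\<^sup>+x. ennreal (nrm c (\<Sum>i\<in>J. x i)) \<partial>PiM J M)"
  proof (rule nn_integral_cong)
    fix x :: "'i \<Rightarrow> real ^ 'p"
    have "\<And>y :: 'i \<Rightarrow> real ^ 'p. (\<Sum>i\<in>J. merge J L (x, y) i) = (\<Sum>i\<in>J. x i)"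
      by (intro sum.cong) (auto simp: merge_def)
    then show "(\<integral>\<^sup>+y. ennreal (nrm c (\<Sum>i\<in>J. merge J L (x, y) i)) \<partial>PiM L M) = ennreal (nrm c (\<Sum>i\<in>J. x i))"
      by (simp add: QL.emeasure_space_1)
  qed
  also have "\<dots> \<le> (\<integral>\<^sup>+x. (\<integral>\<^sup>+y. ennreal (nrm c (\<Sum>i\<in>J \<union> L. merge J L (x, y) i)) \<partial>PiM L M) \<partial>PiM J M)"
  proof (rule nn_integral_mono)
    fix x :: "'i \<Rightarrow> real ^ 'p"
    have sJ: "\<And>y :: 'i \<Rightarrow> real ^ 'p. (\<Sum>i\<in>J. merge J L (x, y) i) = (\<Sum>i\<in>J. x i)"
      by (intro sum.cong) (auto simp: merge_def)
    have eq: "\<And>y :: 'i \<Rightarrow> real ^ 'p. (\<Sum>i\<in>J \<union> L. merge J L (x, y) i) = (\<Sum>i\<in>J. x i) + (\<Sum>i\<in>L. y i)"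
    proof -
      fix y :: "'i \<Rightarrow> real ^ 'p"
      have "(\<Sum>i\<in>J \<union> L. merge J L (x, y) i) = (\<Sum>i\<in>J. merge J L (x, y) i) + (\<Sum>i\<in>L. merge J L (x, y) i)"
        using IJL by (intro sum.union_disjoint) auto
      also have "\<dots> = (\<Sum>i\<in>J. x i) + (\<Sum>i\<in>L. y i)"
        using IJL by (intro arg_cong2[where f="(+)"] sum.cong) (auto simp: merge_def)
      finally show "?thesis y" .
    qed
    have "ennreal (nrm c (\<Sum>i\<in>J. x i)) \<le> (\<integral>\<^sup>+y. ennreal (nrm c ((\<Sum>i\<in>J. x i) + (\<Sum>i\<in>L. y i))) \<partial>PiM L M)"
    proof (rule jensen_one)
      show "prob_space (PiM L M)" by (rule QL.prob_space_axioms)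
      show "(\<lambda>y. \<Sum>i\<in>L. y i) \<in> borel_measurable (PiM L M)"
        by (rule meas_sum_comp) (auto simp: M)
      fix j
      have ci: "integrable (PiM L M) (\<lambda>y. y i $ j) \<and> (\<integral>y. y i $ j \<partial>PiM L M) = 0" if "i \<in> L" for i
        using that by (intro comp_integrable M mz) (auto simp: L_def)
      show "integrable (PiM L M) (\<lambda>y. (\<Sum>i\<in>L. y i) $ j)"
        unfolding sum_component using ci by auto
      show "(\<integral>y. (\<Sum>i\<in>L. y i) $ j \<partial>PiM L M) = 0"
        unfolding sum_component using Bochner_Integration.integral_sum[where f="\<lambda>i y. y i $ j" and I=L and M="PiM L M"] ci by simp
    qed
    then show "ennreal (nrm c (\<Sum>i\<in>J. x i)) \<le> (\<integral>\<^sup>+y. ennreal (nrm c (\<Sum>i\<in>J \<union> L. merge J L (x, y) i)) \<partial>PiM L M)"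
      using eq by simp
  qed
  also have "\<dots> = (\<integral>\<^sup>+x. ennreal (nrm c (\<Sum>i\<in>I. x i)) \<partial>PiM I M)"
    unfolding IJL(1) by (rule product_nn_integral_fold[OF IJL(2-4) f2, symmetric])
  finally show ?thesis .
qed


lemma marg_lemma:
  fixes M :: "'i \<Rightarrow> (real ^ 'p::finite) measure"
  assumes M: "\<And>i. prob_space (M i)" "\<And>i. sets (M i) = sets borel"
    and K: "finite K" "J \<subseteq> K" and F: "F \<in> borel_measurable (PiM J M)"
  shows "(\<integral>\<^sup>+x. F (restrict x J) \<partial>PiM K M) = (\<integral>\<^sup>+y. F y \<partial>PiM J M)"
proof -
  interpret product_prob_space M K
    using M by (simp add: product_prob_space_def product_prob_space_axioms_def
        product_sigma_finite_def prob_space_imp_sigma_finite)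
  have "PiM J M = distr (PiM K M) (PiM J M) (\<lambda>f. restrict f J)"
    by (rule distr_restrict[OF K(2,1)])
  then have "(\<integral>\<^sup>+y. F y \<partial>PiM J M) = (\<integral>\<^sup>+y. F y \<partial>distr (PiM K M) (PiM J M) (\<lambda>f. restrict f J))"
    by simp
  also have "\<dots> = (\<integral>\<^sup>+x. F (restrict x J) \<partial>PiM K M)"
    using K F by (intro nn_integral_distr measurable_restrict_subset) auto
  finally show ?thesis ..
qed

lemma reidx_lemma:
  fixes M :: "'k \<Rightarrow> (real ^ 'p::finite) measure" and f :: "'i \<Rightarrow> 'k"
  assumes M: "\<And>i. prob_space (M i)"
    and f: "inj_on f I" "f \<in> I \<rightarrow> K" and F: "F \<in> borel_measurable (PiM I (\<lambda>i. M (f i)))"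
  shows "(\<integral>\<^sup>+y. F y \<partial>PiM I (\<lambda>i. M (f i))) = (\<integral>\<^sup>+x. F (\<lambda>n\<in>I. x (f n)) \<partial>PiM K M)"
proof -
  have "PiM I (\<lambda>i. M (f i)) = distr (PiM K M) (PiM I (\<lambda>i. M (f i))) (\<lambda>\<omega>. \<lambda>n\<in>I. \<omega> (f n))"
    using distr_PiM_reindex[of K M f I] M f by simp
  then have "(\<integral>\<^sup>+y. F y \<partial>PiM I (\<lambda>i. M (f i))) = (\<integral>\<^sup>+y. F y \<partial>distr (PiM K M) (PiM I (\<lambda>i. M (f i))) (\<lambda>\<omega>. \<lambda>n\<in>I. \<omega> (f n)))"
    by simp
  also have "\<dots> = (\<integral>\<^sup>+x. F (\<lambda>n\<in>I. x (f n)) \<partial>PiM K M)"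
  proof (rule nn_integral_distr)
    show "F \<in> borel_measurable (distr (PiM K M) (PiM I (\<lambda>i. M (f i))) (\<lambda>\<omega>. \<lambda>n\<in>I. \<omega> (f n)))"
      using F by (subst measurable_cong_sets[OF sets_distr refl])
    show "(\<lambda>\<omega>. \<lambda>n\<in>I. \<omega> (f n)) \<in> measurable (PiM K M) (PiM I (\<lambda>i. M (f i)))"
      using f by (intro measurable_restrict measurable_component_singleton) auto
  qed
  finally show ?thesis .
qed

lemma middle_lemma:
  fixes N :: "'i \<Rightarrow> (real ^ 'p::finite) measure" and \<kappa> :: "'i \<Rightarrow> 'i"
  assumes N: "\<And>i. prob_space (N i)" "\<And>i. sets (N i) = sets borel"
    and mz: "\<And>k. k \<in> K \<Longrightarrow> mean_zero (N k)"
    and IK: "finite I" "finite K" and \<kappa>: "\<kappa> \<in> I \<rightarrow> K"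
  shows "(\<integral>\<^sup>+x. ennreal (nrm c (\<Sum>k\<in>\<kappa>`I. x k)) \<partial>PiM K N)
       \<le> (\<integral>\<^sup>+y. ennreal (nrm c (\<Sum>i\<in>I. y i)) \<partial>PiM I (\<lambda>i. N (\<kappa> i)))"
proof -
  obtain S where S: "S \<subseteq> I" "inj_on \<kappa> S" "\<kappa> ` I = \<kappa> ` S"
    using subset_image_inj[of "\<kappa> ` I" \<kappa> I] by auto
  have RK: "\<kappa> ` I \<subseteq> K" using \<kappa> by auto
  have fS: "finite S" "finite (\<kappa> ` I)" using S IK by (auto intro: finite_subset)
  have N': "\<And>i. prob_space (N (\<kappa> i))" "\<And>i. sets (N (\<kappa> i)) = sets borel" using N by auto
  have "(\<integral>\<^sup>+x. ennreal (nrm c (\<Sum>k\<in>\<kappa>`I. x k)) \<partial>PiM K N)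
      = (\<integral>\<^sup>+x. ennreal (nrm c (\<Sum>k\<in>\<kappa>`I. restrict x (\<kappa>`I) k)) \<partial>PiM K N)"
    by (intro nn_integral_cong) (simp add: restrict_def)
  also have "\<dots> = (\<integral>\<^sup>+x. ennreal (nrm c (\<Sum>k\<in>\<kappa>`I. x k)) \<partial>PiM (\<kappa>`I) N)"
  proof -
    have m: "(\<lambda>y. ennreal (nrm c (\<Sum>i\<in>\<kappa>`I. y i))) \<in> borel_measurable (PiM (\<kappa>`I) N)"
      using meas_sum_comp[of N "\<kappa>`I" "\<kappa>`I"] N(2) by measurable
    show ?thesis using marg_lemma[OF N IK(2) RK m] by simp
  qed
  also have "\<dots> = (\<integral>\<^sup>+x. ennreal (nrm c (\<Sum>i\<in>S. (\<lambda>n\<in>S. x (\<kappa> n)) i)) \<partial>PiM (\<kappa>`I) N)"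
  proof (intro nn_integral_cong)
    fix x :: "'i \<Rightarrow> real ^ 'p"
    have "(\<Sum>k\<in>\<kappa>`I. x k) = (\<Sum>i\<in>S. x (\<kappa> i))"
      unfolding S(3) using S(2) by (rule sum.reindex[unfolded comp_def])
    also have "\<dots> = (\<Sum>i\<in>S. (\<lambda>n\<in>S. x (\<kappa> n)) i)" by simp
    finally show "ennreal (nrm c (\<Sum>k\<in>\<kappa>`I. x k)) = ennreal (nrm c (\<Sum>i\<in>S. (\<lambda>n\<in>S. x (\<kappa> n)) i))"
      by simp
  qed
  also have "\<dots> = (\<integral>\<^sup>+y. ennreal (nrm c (\<Sum>i\<in>S. y i)) \<partial>PiM S (\<lambda>i. N (\<kappa> i)))"
  proof -
    have k: "\<kappa> \<in> S \<rightarrow> \<kappa> ` I" using S by auto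
    have m: "(\<lambda>y. ennreal (nrm c (\<Sum>i\<in>S. y i))) \<in> borel_measurable (PiM S (\<lambda>i. N (\<kappa> i)))"
      using meas_sum_comp[of "\<lambda>i. N (\<kappa> i)" S S] N(2) by measurable
    show ?thesis using reidx_lemma[OF N(1) S(2) k m] by simp
  qed
  also have "\<dots> = (\<integral>\<^sup>+y. ennreal (nrm c (\<Sum>i\<in>S. restrict y S i)) \<partial>PiM I (\<lambda>i. N (\<kappa> i)))"
  proof -
    have m: "(\<lambda>y. ennreal (nrm c (\<Sum>i\<in>S. y i))) \<in> borel_measurable (PiM S (\<lambda>i. N (\<kappa> i)))"
      using meas_sum_comp[of "\<lambda>i. N (\<kappa> i)" S S] N(2) by measurable
    show ?thesis using marg_lemma[OF N' IK(1) S(1) m] by simp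
  qed
  also have "\<dots> = (\<integral>\<^sup>+y. ennreal (nrm c (\<Sum>i\<in>S. y i)) \<partial>PiM I (\<lambda>i. N (\<kappa> i)))"
    by (intro nn_integral_cong) (simp add: restrict_def)
  also have "\<dots> \<le> (\<integral>\<^sup>+y. ennreal (nrm c (\<Sum>i\<in>I. y i)) \<partial>PiM I (\<lambda>i. N (\<kappa> i)))"
    using \<kappa> by (intro drop_lemma N' IK(1) S(1) mz) auto
  finally show ?thesis .
qed


lemma mix_expand:
  fixes N :: "'k \<Rightarrow> (real ^ 'p::finite) measure" and M0 :: "(real ^ 'p) measure" and I :: "'i set"
  assumes N: "\<And>k. prob_space (N k)" "\<And>k. sets (N k) = sets borel"
    and M0: "prob_space M0" "sets M0 = sets borel"
    and mix: "\<And>g. g \<in> borel_measurable borel \<Longrightarrow> (\<integral>\<^sup>+x. g x \<partial>M0) = (\<Sum>k\<in>K. ennreal c * \<integral>\<^sup>+x. g x \<partial>N k)"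
    and I: "finite I"
  shows "f \<in> borel_measurable (PiM I (\<lambda>_. M0)) \<Longrightarrow> (\<integral>\<^sup>+x. f x \<partial>PiM I (\<lambda>_. M0))
     = (\<Sum>\<kappa>\<in>PiE I (\<lambda>_. K). ennreal c ^ card I * \<integral>\<^sup>+x. f x \<partial>PiM I (\<lambda>i. N (\<kappa> i)))"
  using I
proof (induction I arbitrary: f rule: finite_induct)
  case empty
  then show ?case by (simp add: PiM_empty)
next
  case (insert a I f)
  interpret S0: product_sigma_finite "\<lambda>_. M0"
    using M0 by (simp add: product_sigma_finite_def prob_space_imp_sigma_finite)
  note fm = insert.prems
  define G where "G k x = (\<integral>\<^sup>+y. f (x(a := y)) \<partial>N k)" for k x
  have Gm: "G k \<in> borel_measurable (PiM I (\<lambda>_. M0))" for k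
  proof -
    interpret Nk: sigma_finite_measure "N k" using N by (simp add: prob_space_imp_sigma_finite)
    have madd: "(\<lambda>(x, y). x(a := y)) \<in> measurable (PiM I (\<lambda>_. M0) \<Otimes>\<^sub>M M0) (PiM (insert a I) (\<lambda>_. M0))"
      using measurable_add_dim[of a I "\<lambda>_. M0"] by simp
    have "(\<lambda>(x, y). x(a := y)) \<in> measurable (PiM I (\<lambda>_. M0) \<Otimes>\<^sub>M N k) (PiM (insert a I) (\<lambda>_. M0))"
    proof -
      have "sets (PiM I (\<lambda>_. M0) \<Otimes>\<^sub>M N k) = sets (PiM I (\<lambda>_. M0) \<Otimes>\<^sub>M M0)"
        by (intro sets_pair_measure_cong) (auto simp: N M0)
      then show ?thesis using measurable_cong_sets[OF _ refl] madd by blast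
    qed
    then have "(\<lambda>p. f (case p of (x, y) \<Rightarrow> x(a := y))) \<in> borel_measurable (PiM I (\<lambda>_. M0) \<Otimes>\<^sub>M N k)"
      using fm by (rule measurable_compose)
    then have "(\<lambda>x. \<integral>\<^sup>+y. (\<lambda>p. f (case p of (x, y) \<Rightarrow> x(a := y))) (x, y) \<partial>N k) \<in> borel_measurable (PiM I (\<lambda>_. M0))"
      by (rule Nk.borel_measurable_nn_integral_fst)
    then show ?thesis by (simp add: G_def[abs_def])
  qed
  have X: "(\<integral>\<^sup>+x. G k x \<partial>PiM I (\<lambda>i. N (\<kappa> i))) = (\<integral>\<^sup>+x. f x \<partial>PiM (insert a I) (\<lambda>i. N ((\<kappa>(a := k)) i)))"
    for \<kappa> k
  proof -
    interpret Sk: product_sigma_finite "\<lambda>i. N ((\<kappa>(a := k)) i)"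
      using N by (simp add: product_sigma_finite_def prob_space_imp_sigma_finite)
    have "sets (PiM (insert a I) (\<lambda>i. N ((\<kappa>(a := k)) i))) = sets (PiM (insert a I) (\<lambda>_. M0))"
      by (intro sets_PiM_cong) (auto simp: N M0)
    then have fm': "f \<in> borel_measurable (PiM (insert a I) (\<lambda>i. N ((\<kappa>(a := k)) i)))"
      using fm measurable_cong_sets[OF _ refl] by blast
    have "(\<integral>\<^sup>+x. f x \<partial>PiM (insert a I) (\<lambda>i. N ((\<kappa>(a := k)) i)))
        = (\<integral>\<^sup>+x. \<integral>\<^sup>+y. f (x(a := y)) \<partial>N ((\<kappa>(a := k)) a) \<partial>PiM I (\<lambda>i. N ((\<kappa>(a := k)) i)))"
      by (rule Sk.product_nn_integral_insert[OF insert(1,2) fm'])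
    also have "PiM I (\<lambda>i. N ((\<kappa>(a := k)) i)) = PiM I (\<lambda>i. N (\<kappa> i))"
      using insert(2) by (intro PiM_cong) auto
    also have "(\<kappa>(a := k)) a = k" by simp
    finally show ?thesis by (simp add: G_def del: fun_upd_apply cong: nn_integral_cong_simp)
  qed
  have "(\<integral>\<^sup>+x. f x \<partial>PiM (insert a I) (\<lambda>_. M0)) = (\<integral>\<^sup>+x. \<integral>\<^sup>+y. f (x(a := y)) \<partial>M0 \<partial>PiM I (\<lambda>_. M0))"
    by (rule S0.product_nn_integral_insert[OF insert(1,2) fm])
  also have "\<dots> = (\<integral>\<^sup>+x. (\<Sum>k\<in>K. ennreal c * G k x) \<partial>PiM I (\<lambda>_. M0))"
  proof (rule nn_integral_cong)
    fix x assume x: "x \<in> space (PiM I (\<lambda>_. M0))"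
    have "(\<lambda>y. f (x(a := y))) \<in> borel_measurable M0"
      using measurable_comp[OF measurable_component_update[OF x insert(2)] fm] by (simp add: comp_def)
    then have "(\<lambda>y. f (x(a := y))) \<in> borel_measurable borel"
      using M0(2) measurable_cong_sets by blast
    then show "(\<integral>\<^sup>+y. f (x(a := y)) \<partial>M0) = (\<Sum>k\<in>K. ennreal c * G k x)"
      unfolding G_def by (rule mix)
  qed
  also have "\<dots> = (\<Sum>k\<in>K. ennreal c * \<integral>\<^sup>+x. G k x \<partial>PiM I (\<lambda>_. M0))"
    using Gm by (subst nn_integral_sum) (auto intro!: sum.cong nn_integral_cmult)
  also have "\<dots> = (\<Sum>k\<in>K. ennreal c * (\<Sum>\<kappa>\<in>PiE I (\<lambda>_. K). ennreal c ^ card I * \<integral>\<^sup>+x. G k x \<partial>PiM I (\<lambda>i. N (\<kappa> i))))"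
    using insert.IH Gm by simp
  also have "\<dots> = (\<Sum>k\<in>K. \<Sum>\<kappa>\<in>PiE I (\<lambda>_. K). ennreal c ^ card (insert a I) * \<integral>\<^sup>+x. f x \<partial>PiM (insert a I) (\<lambda>i. N ((\<kappa>(a := k)) i)))"
    using insert(1,2) by (simp add: X sum_distrib_left mult.assoc)
  also have "\<dots> = (\<Sum>p\<in>K \<times> PiE I (\<lambda>_. K). ennreal c ^ card (insert a I) * \<integral>\<^sup>+x. f x \<partial>PiM (insert a I) (\<lambda>i. N (((\<lambda>(y, g). g(a := y)) p) i)))"
    by (subst sum.cartesian_product) (simp add: case_prod_beta)
  also have "\<dots> = (\<Sum>\<kappa>\<in>PiE (insert a I) (\<lambda>_. K). ennreal c ^ card (insert a I) * \<integral>\<^sup>+x. f x \<partial>PiM (insert a I) (\<lambda>i. N (\<kappa> i)))"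
    unfolding PiE_insert_eq
    using sum.reindex[OF inj_combinator[OF insert(2), of "\<lambda>_. K"],
        of "\<lambda>\<kappa>. ennreal c ^ card (insert a I) * \<integral>\<^sup>+x. f x \<partial>PiM (insert a I) (\<lambda>i. N (\<kappa> i))"]
    by (simp add: comp_def)
  finally show ?case .
qed


lemma count_lemma:
  assumes "finite I" "finite K" "k \<in> K"
  shows "card {\<kappa>\<in>PiE I (\<lambda>_. K). k \<in> \<kappa> ` I} = card K ^ card I - (card K - 1) ^ card I"
proof -
  have eq: "{\<kappa>\<in>PiE I (\<lambda>_. K). k \<in> \<kappa> ` I} = PiE I (\<lambda>_. K) - PiE I (\<lambda>_. K - {k})"
    by (auto simp: PiE_iff extensional_def)
  have sub: "PiE I (\<lambda>_. K - {k}) \<subseteq> PiE I (\<lambda>_. K)" by (auto simp: PiE_iff)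
  have "card (PiE I (\<lambda>_. K) - PiE I (\<lambda>_. K - {k})) = card (PiE I (\<lambda>_. K)) - card (PiE I (\<lambda>_. K - {k}))"
    using assms by (intro card_Diff_subset sub finite_PiE) auto
  also have "\<dots> = card K ^ card I - (card K - 1) ^ card I"
    using assms by (simp add: card_PiE)
  finally show ?thesis using eq by simp
qed

lemma sum_lemma:
  fixes x :: "'k \<Rightarrow> real ^ 'p::finite"
  assumes "finite I" "finite K"
  shows "(\<Sum>\<kappa>\<in>PiE I (\<lambda>_. K). \<Sum>k\<in>\<kappa>`I. x k)
       = real (card K ^ card I - (card K - 1) ^ card I) *\<^sub>R (\<Sum>k\<in>K. x k)"
proof -
  have "(\<Sum>\<kappa>\<in>PiE I (\<lambda>_. K). \<Sum>k\<in>\<kappa>`I. x k) = (\<Sum>\<kappa>\<in>PiE I (\<lambda>_. K). \<Sum>k\<in>K. if k \<in> \<kappa>`I then x k else 0)"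
  proof (rule sum.cong[OF refl])
    fix \<kappa> assume "\<kappa> \<in> PiE I (\<lambda>_. K)"
    then have sub: "\<kappa>`I \<subseteq> K" by (auto simp: PiE_iff)
    have "(\<Sum>k\<in>K. if k \<in> \<kappa>`I then x k else 0) = (\<Sum>k\<in>{k\<in>K. k \<in> \<kappa>`I}. x k)"
      using assms by (simp add: sum.inter_filter)
    also have "{k\<in>K. k \<in> \<kappa>`I} = \<kappa>`I" using sub by auto
    finally show "(\<Sum>k\<in>\<kappa>`I. x k) = (\<Sum>k\<in>K. if k \<in> \<kappa>`I then x k else 0)" ..
  qed
  also have "\<dots> = (\<Sum>k\<in>K. \<Sum>\<kappa>\<in>PiE I (\<lambda>_. K). if k \<in> \<kappa>`I then x k else 0)"
    by (rule sum.swap)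
  also have "\<dots> = (\<Sum>k\<in>K. real (card K ^ card I - (card K - 1) ^ card I) *\<^sub>R x k)"
  proof (rule sum.cong[OF refl])
    fix k assume k: "k \<in> K"
    have "(\<Sum>\<kappa>\<in>PiE I (\<lambda>_. K). if k \<in> \<kappa>`I then x k else 0) = (\<Sum>\<kappa>\<in>{\<kappa>\<in>PiE I (\<lambda>_. K). k \<in> \<kappa> ` I}. x k)"
      using assms by (intro sum.inter_filter[symmetric] finite_PiE) auto
    also have "\<dots> = real (card {\<kappa>\<in>PiE I (\<lambda>_. K). k \<in> \<kappa> ` I}) *\<^sub>R x k"
      by (rule sum_constant_scale)
    finally show "(\<Sum>\<kappa>\<in>PiE I (\<lambda>_. K). if k \<in> \<kappa>`I then x k else 0) = real (card K ^ card I - (card K - 1) ^ card I) *\<^sub>R x k"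
      using count_lemma[OF assms k] by simp
  qed
  also have "\<dots> = real (card K ^ card I - (card K - 1) ^ card I) *\<^sub>R (\<Sum>k\<in>K. x k)"
    by (simp add: scaleR_sum_right)
  finally show ?thesis .
qed

lemma numeric_bound:
  fixes n :: nat assumes "n \<ge> 1"
  shows "real n ^ n \<le> 2 * real (n ^ n - (n - 1) ^ n)"
proof -
  have n0: "real n > 0" using assms by auto
  have "1 - 1 / real n \<le> exp (- 1 / real n)"
    using exp_ge_add_one_self[of "- 1 / real n"] by simp
  moreover have "0 \<le> 1 - 1 / real n" using assms by (simp add: field_simps)
  ultimately have "(1 - 1 / real n) ^ n \<le> exp (- 1 / real n) ^ n"
    by (intro power_mono) auto
  also have "\<dots> = exp (real n * (- 1 / real n))"
    by (subst exp_of_nat_mult) simp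
  also have "\<dots> = exp (- 1)" using n0 by simp
  also have "\<dots> \<le> 1 / 2"
  proof -
    have "2 \<le> exp (1::real)" using exp_ge_add_one_self[of 1] by simp
    then show ?thesis by (simp add: exp_minus field_simps)
  qed
  finally have h: "(1 - 1 / real n) ^ n \<le> 1 / 2" .
  have "real (n - 1) = real n * (1 - 1 / real n)"
    using assms n0 by (simp add: field_simps of_nat_diff)
  then have "real (n - 1) ^ n = (real n * (1 - 1 / real n)) ^ n"
    by simp
  also have "\<dots> = real n ^ n * (1 - 1 / real n) ^ n" by (simp add: power_mult_distrib)
  also have "\<dots> \<le> real n ^ n * (1 / 2)" using h by (intro mult_left_mono) auto
  finally have h2: "2 * real (n - 1) ^ n \<le> real n ^ n" by simp
  have le: "(n - 1) ^ n \<le> n ^ n" by (intro power_mono) auto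
  have "real (n ^ n - (n - 1) ^ n) = real n ^ n - real (n - 1) ^ n"
    using le by (simp add: of_nat_diff)
  then show ?thesis using h2 by simp
qed


lemma main_ineq:
  fixes N :: "nat \<Rightarrow> (real ^ 'p::finite) measure" and M0 :: "(real ^ 'p) measure"
  assumes N: "\<And>k. prob_space (N k)" "\<And>k. sets (N k) = sets borel"
    and mz: "\<And>k. k < n \<Longrightarrow> mean_zero (N k)"
    and M0: "prob_space M0" "sets M0 = sets borel"
    and mix: "\<And>g. g \<in> borel_measurable borel \<Longrightarrow> (\<integral>\<^sup>+x. g x \<partial>M0) = (\<Sum>k\<in>{..<n}. ennreal (1 / real n) * \<integral>\<^sup>+x. g x \<partial>N k)"
    and n: "n \<ge> 1"
  shows "(\<integral>\<^sup>+x. ennreal (nrm c (\<Sum>k\<in>{..<n}. x k)) \<partial>PiM {..<n} N)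
     \<le> 16 * (\<integral>\<^sup>+x. ennreal (nrm c (\<Sum>k\<in>{..<n}. x k)) \<partial>PiM {..<n} (\<lambda>_. M0))"
proof -
  define I where "I = {..<n::nat}"
  define m where "m = n ^ n - (n - 1) ^ n"
  define A where "A = (\<integral>\<^sup>+x. ennreal (nrm c (\<Sum>k\<in>I. x k)) \<partial>PiM I N)"
  define E0 where "E0 = (\<integral>\<^sup>+x. ennreal (nrm c (\<Sum>k\<in>I. x k)) \<partial>PiM I (\<lambda>_. M0))"
  define T where "T \<kappa> = (\<integral>\<^sup>+y. ennreal (nrm c (\<Sum>i\<in>I. y i)) \<partial>PiM I (\<lambda>i. N (\<kappa> i)))" for \<kappa>
  have cardI: "card I = n" and finI: "finite I" unfolding I_def by auto
  have step1: "ennreal (real m) * A \<le> (\<Sum>\<kappa>\<in>PiE I (\<lambda>_. I). T \<kappa>)"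
  proof -
    have mA: "(\<lambda>x. ennreal (nrm c (\<Sum>k\<in>I. x k))) \<in> borel_measurable (PiM I N)"
      using meas_sum_comp[of N I I] N(2) by measurable
    have "ennreal (real m) * A = (\<integral>\<^sup>+x. ennreal (real m) * ennreal (nrm c (\<Sum>k\<in>I. x k)) \<partial>PiM I N)"
      unfolding A_def using mA by (rule nn_integral_cmult[symmetric])
    also have "\<dots> \<le> (\<integral>\<^sup>+x. (\<Sum>\<kappa>\<in>PiE I (\<lambda>_. I). ennreal (nrm c (\<Sum>k\<in>\<kappa>`I. x k))) \<partial>PiM I N)"
    proof (rule nn_integral_mono)
      fix x :: "nat \<Rightarrow> real ^ 'p"
      have "real m * nrm c (\<Sum>k\<in>I. x k) = nrm c (real m *\<^sub>R (\<Sum>k\<in>I. x k))"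
        by (simp add: nrm_scale)
      also have "real m *\<^sub>R (\<Sum>k\<in>I. x k) = (\<Sum>\<kappa>\<in>PiE I (\<lambda>_. I). \<Sum>k\<in>\<kappa>`I. x k)"
        using sum_lemma[OF finI finI, of x] cardI m_def by simp
      also have "nrm c \<dots> \<le> (\<Sum>\<kappa>\<in>PiE I (\<lambda>_. I). nrm c (\<Sum>k\<in>\<kappa>`I. x k))"
        using finI by (intro nrm_sum finite_PiE) auto
      finally have "ennreal (real m * nrm c (\<Sum>k\<in>I. x k)) \<le> ennreal (\<Sum>\<kappa>\<in>PiE I (\<lambda>_. I). nrm c (\<Sum>k\<in>\<kappa>`I. x k))"
        by (rule ennreal_leI)
      also have "\<dots> = (\<Sum>\<kappa>\<in>PiE I (\<lambda>_. I). ennreal (nrm c (\<Sum>k\<in>\<kappa>`I. x k)))"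
        by (rule sum_ennreal[symmetric]) (simp add: nrm_nonneg)
      finally show "ennreal (real m) * ennreal (nrm c (\<Sum>k\<in>I. x k)) \<le> (\<Sum>\<kappa>\<in>PiE I (\<lambda>_. I). ennreal (nrm c (\<Sum>k\<in>\<kappa>`I. x k)))"
        by (simp add: ennreal_mult')
    qed
    also have "\<dots> = (\<Sum>\<kappa>\<in>PiE I (\<lambda>_. I). \<integral>\<^sup>+x. ennreal (nrm c (\<Sum>k\<in>\<kappa>`I. x k)) \<partial>PiM I N)"
    proof (rule nn_integral_sum)
      fix \<kappa> assume "\<kappa> \<in> PiE I (\<lambda>_. I)"
      then have "\<kappa> ` I \<subseteq> I" by (auto simp: PiE_iff)
      then show "(\<lambda>x. ennreal (nrm c (\<Sum>k\<in>\<kappa>`I. x k))) \<in> borel_measurable (PiM I N)"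
        using meas_sum_comp[of N "\<kappa>`I" I] N(2) by measurable
    qed
    also have "\<dots> \<le> (\<Sum>\<kappa>\<in>PiE I (\<lambda>_. I). T \<kappa>)"
    proof (rule sum_mono)
      fix \<kappa> assume "\<kappa> \<in> PiE I (\<lambda>_. I)"
      then have "\<kappa> \<in> I \<rightarrow> I" by (auto simp: PiE_iff)
      then show "(\<integral>\<^sup>+x. ennreal (nrm c (\<Sum>k\<in>\<kappa>`I. x k)) \<partial>PiM I N) \<le> T \<kappa>"
        unfolding T_def using mz finI by (intro middle_lemma N) (auto simp: I_def)
    qed
    finally show ?thesis .
  qed
  have step2: "E0 = (\<Sum>\<kappa>\<in>PiE I (\<lambda>_. I). ennreal (1 / real n) ^ card I * T \<kappa>)"
    unfolding E0_def T_def
  proof (rule mix_expand[OF N M0 _ finI])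
    show "\<And>g. g \<in> borel_measurable borel \<Longrightarrow> integral\<^sup>N M0 g = (\<Sum>k\<in>I. ennreal (1 / real n) * integral\<^sup>N (N k) g)"
      using mix unfolding I_def by blast
    show "(\<lambda>x. ennreal (nrm c (\<Sum>k\<in>I. x k))) \<in> borel_measurable (PiM I (\<lambda>_. M0))"
      using meas_sum_comp[of "\<lambda>_. M0" I I] M0(2) by measurable
  qed
  have nn: "ennreal (real n ^ n) * ennreal (1 / real n) ^ n = 1"
    using n by (simp add: ennreal_power[symmetric] ennreal_mult'[symmetric] power_mult_distrib[symmetric])
  have step2': "(\<Sum>\<kappa>\<in>PiE I (\<lambda>_. I). T \<kappa>) = ennreal (real n ^ n) * E0"
    unfolding step2 cardI sum_distrib_left mult.assoc[symmetric] nn by simp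
  have "ennreal (real n ^ n) * A \<le> ennreal (2 * real m) * A"
    using numeric_bound[OF n] unfolding m_def by (intro mult_right_mono ennreal_leI) auto
  also have "\<dots> = 2 * (ennreal (real m) * A)"
    by (simp add: ennreal_mult mult.assoc)
  also have "\<dots> \<le> 2 * (ennreal (real n ^ n) * E0)"
    using step1 step2' by (intro mult_left_mono) auto
  also have "\<dots> \<le> ennreal (real n ^ n) * (16 * E0)"
  proof -
    have "2 * (ennreal (real n ^ n) * E0) = ennreal (real n ^ n) * (2 * E0)" by (simp add: ac_simps)
    also have "\<dots> \<le> ennreal (real n ^ n) * (16 * E0)"
      by (intro mult_left_mono mult_right_mono) auto
    finally show ?thesis .
  qed
  finally have "ennreal (real n ^ n) * A \<le> ennreal (real n ^ n) * (16 * E0)" .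
  then have "A \<le> 16 * E0"
    using n by (subst (asm) ennreal_mult_le_mult_iff) auto
  then show ?thesis unfolding A_def E0_def I_def .
qed


lemma mix_hb_nonneg:
  fixes N :: "'k \<Rightarrow> (real ^ 'p::finite) measure" and M0 :: "(real ^ 'p) measure"
  assumes mix: "\<And>g. g \<in> borel_measurable borel \<Longrightarrow> (\<integral>\<^sup>+x. g x \<partial>M0) = (\<Sum>k\<in>K. ennreal c * \<integral>\<^sup>+x. g x \<partial>N k)"
    and M0: "sets M0 = sets borel" and N: "\<And>k. sets (N k) = sets borel"
    and c: "0 \<le> c" and f: "f \<in> borel_measurable borel" and f0: "\<And>x. 0 \<le> f x"
    and int: "\<And>k. k \<in> K \<Longrightarrow> integrable (N k) f"
  shows "has_bochner_integral M0 f (\<Sum>k\<in>K. c * (\<integral>x. f x \<partial>N k))"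
proof (rule has_bochner_integral_nn_integral)
  show "f \<in> borel_measurable M0" using f M0 measurable_cong_sets by blast
  show "AE x in M0. 0 \<le> f x" using f0 by simp
  show "0 \<le> (\<Sum>k\<in>K. c * (\<integral>x. f x \<partial>N k))"
    using c f0 by (intro sum_nonneg mult_nonneg_nonneg integral_nonneg) auto
  have "(\<integral>\<^sup>+x. ennreal (f x) \<partial>M0) = (\<Sum>k\<in>K. ennreal c * \<integral>\<^sup>+x. ennreal (f x) \<partial>N k)"
    using f by (intro mix) measurable
  also have "\<dots> = (\<Sum>k\<in>K. ennreal (c * (\<integral>x. f x \<partial>N k)))"
  proof (rule sum.cong[OF refl])
    fix k assume k: "k \<in> K"
    have "(\<integral>\<^sup>+x. ennreal (f x) \<partial>N k) = ennreal (\<integral>x. f x \<partial>N k)"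
      using int[OF k] f0 by (intro nn_integral_eq_integral) auto
    then show "ennreal c * (\<integral>\<^sup>+x. ennreal (f x) \<partial>N k) = ennreal (c * (\<integral>x. f x \<partial>N k))"
      using c by (simp add: ennreal_mult')
  qed
  also have "\<dots> = ennreal (\<Sum>k\<in>K. c * (\<integral>x. f x \<partial>N k))"
    using c f0 by (intro sum_ennreal mult_nonneg_nonneg integral_nonneg) auto
  finally show "(\<integral>\<^sup>+x. ennreal (f x) \<partial>M0) = ennreal (\<Sum>k\<in>K. c * (\<integral>x. f x \<partial>N k))" .
qed

lemma mix_hb:
  fixes N :: "'k \<Rightarrow> (real ^ 'p::finite) measure" and M0 :: "(real ^ 'p) measure"
  assumes mix: "\<And>g. g \<in> borel_measurable borel \<Longrightarrow> (\<integral>\<^sup>+x. g x \<partial>M0) = (\<Sum>k\<in>K. ennreal c * \<integral>\<^sup>+x. g x \<partial>N k)"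
    and M0: "sets M0 = sets borel" and N: "\<And>k. sets (N k) = sets borel"
    and c: "0 \<le> c" and f: "f \<in> borel_measurable borel"
    and int: "\<And>k. k \<in> K \<Longrightarrow> integrable (N k) f"
  shows "integrable M0 f \<and> (\<integral>x. f x \<partial>M0) = (\<Sum>k\<in>K. c * (\<integral>x. f x \<partial>N k))"
proof -
  have p: "has_bochner_integral M0 (\<lambda>x. max 0 (f x)) (\<Sum>k\<in>K. c * (\<integral>x. max 0 (f x) \<partial>N k))"
    using f int by (intro mix_hb_nonneg[OF mix M0 N c]) (auto intro: integrable_max)
  have m: "has_bochner_integral M0 (\<lambda>x. max 0 (- f x)) (\<Sum>k\<in>K. c * (\<integral>x. max 0 (- f x) \<partial>N k))"
    using f int by (intro mix_hb_nonneg[OF mix M0 N c]) (auto intro: integrable_max)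
  have d: "has_bochner_integral M0 (\<lambda>x. max 0 (f x) - max 0 (- f x))
      ((\<Sum>k\<in>K. c * (\<integral>x. max 0 (f x) \<partial>N k)) - (\<Sum>k\<in>K. c * (\<integral>x. max 0 (- f x) \<partial>N k)))"
    by (rule has_bochner_integral_diff[OF p m])
  have fe: "(\<lambda>x. max 0 (f x) - max 0 (- f x)) = f" by (auto simp: fun_eq_iff max_def)
  have "(\<Sum>k\<in>K. c * (\<integral>x. max 0 (f x) \<partial>N k)) - (\<Sum>k\<in>K. c * (\<integral>x. max 0 (- f x) \<partial>N k))
      = (\<Sum>k\<in>K. c * ((\<integral>x. max 0 (f x) \<partial>N k) - (\<integral>x. max 0 (- f x) \<partial>N k)))"
    by (simp add: sum_subtractf right_diff_distrib)
  also have "\<dots> = (\<Sum>k\<in>K. c * (\<integral>x. f x \<partial>N k))"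
  proof (rule sum.cong[OF refl])
    fix k assume k: "k \<in> K"
    have "(\<integral>x. max 0 (f x) \<partial>N k) - (\<integral>x. max 0 (- f x) \<partial>N k) = (\<integral>x. max 0 (f x) - max 0 (- f x) \<partial>N k)"
      using int[OF k] by (intro Bochner_Integration.integral_diff[symmetric]) (auto intro: integrable_max)
    then show "c * ((\<integral>x. max 0 (f x) \<partial>N k) - (\<integral>x. max 0 (- f x) \<partial>N k)) = c * (\<integral>x. f x \<partial>N k)"
      using fe by simp
  qed
  finally have "has_bochner_integral M0 f (\<Sum>k\<in>K. c * (\<integral>x. f x \<partial>N k))"
    using d fe by simp
  then show ?thesis by (simp add: has_bochner_integral_iff)
qed

lemma mix_emeasure:
  fixes N :: "'k \<Rightarrow> (real ^ 'p::finite) measure" and M0 :: "(real ^ 'p) measure"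
  assumes mix: "\<And>g. g \<in> borel_measurable borel \<Longrightarrow> (\<integral>\<^sup>+x. g x \<partial>M0) = (\<Sum>k\<in>K. ennreal c * \<integral>\<^sup>+x. g x \<partial>N k)"
    and M0: "sets M0 = sets borel" and N: "\<And>k. sets (N k) = sets borel" and A: "A \<in> sets borel"
  shows "emeasure M0 A = (\<Sum>k\<in>K. ennreal c * emeasure (N k) A)"
proof -
  have "emeasure M0 A = (\<integral>\<^sup>+x. indicator A x \<partial>M0)"
    using A M0 by (simp add: nn_integral_indicator)
  also have "\<dots> = (\<Sum>k\<in>K. ennreal c * \<integral>\<^sup>+x. indicator A x \<partial>N k)"
    using A by (intro mix) auto
  also have "\<dots> = (\<Sum>k\<in>K. ennreal c * emeasure (N k) A)"
    using A N by (simp add: nn_integral_indicator)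
  finally show ?thesis .
qed


lemma mixture_exists:
  fixes N :: "nat \<Rightarrow> (real ^ 'p::finite) measure"
  assumes N: "\<And>k. prob_space (N k)" "\<And>k. sets (N k) = sets borel" and n: "n \<ge> 1"
  shows "\<exists>M0. prob_space M0 \<and> sets M0 = sets borel \<and>
    (\<forall>g. g \<in> borel_measurable borel \<longrightarrow> (\<integral>\<^sup>+x. g x \<partial>M0) = (\<Sum>k\<in>{..<n}. ennreal (1 / real n) * \<integral>\<^sup>+x. g x \<partial>N k))"
proof -
  let ?p = "measure_pmf (pmf_of_set {..<n})"
  define M0 where "M0 = ?p \<bind> N"
  have Nm: "N \<in> measurable ?p (subprob_algebra borel)"
    by (auto simp: measurable_pmf_measure1 space_subprob_algebra N prob_space_imp_subprob_space)
  have "prob_space M0" unfolding M0_def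
    by (intro measure_pmf.prob_space_bind[OF _ Nm]) (auto simp: N)
  moreover have "sets M0 = sets borel" unfolding M0_def
    by (rule sets_bind[where N=borel]) (auto simp: N)
  moreover have "(\<integral>\<^sup>+x. g x \<partial>M0) = (\<Sum>k\<in>{..<n}. ennreal (1 / real n) * \<integral>\<^sup>+x. g x \<partial>N k)"
    if g: "g \<in> borel_measurable borel" for g
  proof -
    have "(\<integral>\<^sup>+x. g x \<partial>M0) = (\<integral>\<^sup>+k. \<integral>\<^sup>+x. g x \<partial>N k \<partial>?p)"
      unfolding M0_def by (rule nn_integral_bind[OF g Nm])
    also have "\<dots> = (\<Sum>k\<in>{..<n}. \<integral>\<^sup>+x. g x \<partial>N k) / of_nat (card {..<n})"
      using n by (intro nn_integral_pmf_of_set) (auto simp: lessThan_empty_iff)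
    also have "\<dots> = (\<Sum>k\<in>{..<n}. \<integral>\<^sup>+x. g x \<partial>N k) * ennreal (1 / real n)"
    proof -
      have "inverse (of_nat n :: ennreal) = ennreal (1 / real n)"
        using n by (simp add: ennreal_of_nat_eq_real_of_nat inverse_ennreal divide_inverse)
      then show ?thesis by (simp add: divide_ennreal_def)
    qed
    also have "\<dots> = (\<Sum>k\<in>{..<n}. ennreal (1 / real n) * \<integral>\<^sup>+x. g x \<partial>N k)"
      by (simp add: sum_distrib_left mult.commute)
    finally show ?thesis .
  qed
  ultimately show ?thesis by blast
qed


lemma avg_const: "n \<ge> 1 \<Longrightarrow> (1 / real n) * (\<Sum>i<n. (a::real)) = a"
  by simp

lemma part1:
  fixes n :: nat and q :: ereal and \<sigma> B :: real
  assumes n: "n \<ge> 1"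
  shows "E_q_star TYPE('p::finite) n q \<sigma> B \<le> E_q TYPE('p) n q \<sigma> B"
  unfolding E_q_star_def E_q_def
proof (rule SUP_least)
  fix P :: "(real ^ 'p) measure" assume P: "P \<in> P_class q \<sigma> B"
  have law: "is_law P" and mz: "mean_zero P"
    and sec: "\<And>j. integrable P (\<lambda>x. (x $ j)^2) \<and> (\<integral>x. (x $ j)^2 \<partial>P) \<le> \<sigma>^2"
    and qc: "if q = \<infinity> then (AE x in P. linf x \<le> B)
      else integrable P (\<lambda>x. linf x powr real_of_ereal q) \<and>
           (\<integral>x. linf x powr real_of_ereal q \<partial>P) powr (1 / real_of_ereal q) \<le> B"
    using P unfolding P_class_def by auto
  have Pp: "prob_space P" using law unfolding is_law_def by auto
  have V: "V_ok \<sigma> n (\<lambda>_. P)"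
    unfolding V_ok_def using sec n by (simp add: avg_const)
  have D: "D_ok q B n (\<lambda>_. P)"
  proof (cases "q = \<infinity>")
    case True
    then have ae: "AE x in P. linf x \<le> B" using qc by simp
    have "\<forall>i\<in>{..<n}. AE x in PiM {..<n} (\<lambda>_. P). linf (x i) \<le> B"
      using ae Pp by (auto intro: AE_PiM_component)
    then have "AE x in PiM {..<n} (\<lambda>_. P). \<forall>i\<in>{..<n}. linf (x i) \<le> B"
      by (intro eventually_ball_finite) auto
    then have "AE x in PiM {..<n} (\<lambda>_. P). \<forall>i<n. linf (x i) \<le> B"
      by (rule eventually_mono) auto
    then show ?thesis unfolding D_ok_def using True by simp
  next
    case False
    then show ?thesis unfolding D_ok_def using qc n by (simp add: avg_const)
  qed
  have adm: "(\<lambda>_. P) \<in> {Ps :: nat \<Rightarrow> (real ^ 'p) measure.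
        (\<forall>i<n. is_law (Ps i) \<and> mean_zero (Ps i)) \<and> V_ok \<sigma> n Ps \<and> D_ok q B n Ps}"
    using law mz V D by auto
  show "(\<integral>\<^sup>+ x. ennreal (Max (range (\<lambda>j. \<bar>(1 / real n) * (\<Sum>i<n. x i $ j)\<bar>))) \<partial>PiM {..<n} (\<lambda>_. P))
      \<le> (SUP Ps \<in> {Ps :: nat \<Rightarrow> (real ^ 'p) measure.
        (\<forall>i<n. is_law (Ps i) \<and> mean_zero (Ps i)) \<and> V_ok \<sigma> n Ps \<and> D_ok q B n Ps}.
      \<integral>\<^sup>+ x. ennreal (Max (range (\<lambda>j. \<bar>(1 / real n) * (\<Sum>i<n. x i $ j)\<bar>))) \<partial>PiM {..<n} Ps)"
    using adm by (rule SUP_upper)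
qed


lemma linf_borel: "linf \<in> borel_measurable (borel :: (real ^ 'p::finite) measure)"
proof -
  have "(\<lambda>x::real ^ 'p. nrm 1 x) \<in> borel_measurable borel" by measurable
  then show ?thesis by (simp add: linf_nrm[abs_def])
qed

lemma linf_meas[measurable (raw)]:
  "f \<in> borel_measurable M \<Longrightarrow> (\<lambda>x. linf (f x :: real ^ 'p::finite)) \<in> borel_measurable M"
  using measurable_compose[OF _ linf_borel] by blast

lemma part2:
  fixes n :: nat and q :: ereal and \<sigma> B :: real
  assumes n: "n \<ge> 1"
  shows "E_q TYPE('p::finite) n q \<sigma> B \<le> 16 * E_q_star TYPE('p) n q \<sigma> B"
  unfolding E_q_def
proof (rule SUP_least)
  fix Ps :: "nat \<Rightarrow> (real ^ 'p) measure"
  assume "Ps \<in> {Ps :: nat \<Rightarrow> (real ^ 'p) measure.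
        (\<forall>i<n. is_law (Ps i) \<and> mean_zero (Ps i)) \<and> V_ok \<sigma> n Ps \<and> D_ok q B n Ps}"
  then have adm: "\<forall>i<n. is_law (Ps i) \<and> mean_zero (Ps i)" "V_ok \<sigma> n Ps" "D_ok q B n Ps" by auto
  define N where "N k = (if k < n then Ps k else Ps 0)" for k
  have n0: "0 < n" using n by simp
  have Np: "\<And>k. prob_space (N k)" "\<And>k. sets (N k) = sets borel"
    using adm(1) n0 unfolding N_def is_law_def by auto
  have Nmz: "\<And>k. k < n \<Longrightarrow> mean_zero (N k)" using adm(1) unfolding N_def by auto
  have NPs: "\<And>k. k < n \<Longrightarrow> N k = Ps k" unfolding N_def by auto
  obtain M0 where M0: "prob_space M0" "sets M0 = sets borel"
    and mix: "\<And>g. g \<in> borel_measurable borel \<Longrightarrow> (\<integral>\<^sup>+x. g x \<partial>M0) = (\<Sum>k\<in>{..<n}. ennreal (1 / real n) * \<integral>\<^sup>+x. g x \<partial>N k)"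
    using mixture_exists[of N n, OF Np n] by blast
  have c0: "0 \<le> 1 / real n" by simp
  note hb = mix_hb[OF mix M0(2) Np(2) c0]
  have M0P: "M0 \<in> P_class q \<sigma> B"
  proof -
    have law: "is_law M0" using M0 unfolding is_law_def by auto
    have mz: "mean_zero M0" unfolding mean_zero_def
    proof
      fix j
      have "integrable M0 (\<lambda>x. x $ j) \<and> (\<integral>x. x $ j \<partial>M0) = (\<Sum>k\<in>{..<n}. 1 / real n * (\<integral>x. x $ j \<partial>N k))"
        using Nmz by (intro hb) (auto simp: mean_zero_def)
      moreover have "\<And>k. k \<in> {..<n} \<Longrightarrow> (\<integral>x. x $ j \<partial>N k) = 0"
        using Nmz by (auto simp: mean_zero_def)
      ultimately show "integrable M0 (\<lambda>x. x $ j) \<and> (\<integral>x. x $ j \<partial>M0) = 0" by simp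
    qed
    have sec: "integrable M0 (\<lambda>x. (x $ j)^2) \<and> (\<integral>x. (x $ j)^2 \<partial>M0) \<le> \<sigma>^2" for j
    proof -
      have vj: "(\<forall>i<n. integrable (Ps i) (\<lambda>x. (x $ j)^2)) \<and>
         (1 / real n) * (\<Sum>i<n. \<integral>x. (x $ j)^2 \<partial>Ps i) \<le> \<sigma>^2"
        using adm(2) unfolding V_ok_def by blast
      have "integrable M0 (\<lambda>x. (x $ j)^2) \<and> (\<integral>x. (x $ j)^2 \<partial>M0) = (\<Sum>k\<in>{..<n}. 1 / real n * (\<integral>x. (x $ j)^2 \<partial>N k))"
        using vj NPs by (intro hb) auto
      moreover have "(\<Sum>k\<in>{..<n}. 1 / real n * (\<integral>x. (x $ j)^2 \<partial>N k)) = (1 / real n) * (\<Sum>i<n. \<integral>x. (x $ j)^2 \<partial>Ps i)"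
        using NPs by (simp add: sum_distrib_left)
      ultimately show ?thesis using vj by simp
    qed
    have qc: "if q = \<infinity> then (AE x in M0. linf x \<le> B)
      else integrable M0 (\<lambda>x. linf x powr real_of_ereal q) \<and>
           (\<integral>x. linf x powr real_of_ereal q \<partial>M0) powr (1 / real_of_ereal q) \<le> B"
    proof (cases "q = \<infinity>")
      case True
      have aeP: "AE x in PiM {..<n} Ps. \<forall>i<n. linf (x i) \<le> B"
        using adm(3) True unfolding D_ok_def by simp
      have PiM_eq: "PiM {..<n} Ps = PiM {..<n} N" by (intro PiM_cong) (auto simp: N_def)
      define A where "A = {y \<in> space (borel :: (real ^ 'p) measure). B < linf y}"
      have A: "A \<in> sets borel" unfolding A_def by measurable
      have "emeasure (N k) A = 0" if k: "k < n" for k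
      proof -
        have ae1: "AE x in PiM {..<n} N. linf (x k) \<le> B"
          using aeP unfolding PiM_eq by (rule eventually_mono) (use k in auto)
        have d: "distr (PiM {..<n} N) (N k) (\<lambda>\<omega>. \<omega> k) = N k"
          using Np k by (intro distr_PiM_component) auto
        have m1: "(\<lambda>\<omega>. \<omega> k) \<in> measurable (PiM {..<n} N) (N k)"
          using k by (intro measurable_component_singleton) auto
        have sp: "space (N k) = space borel" using Np(2) by (rule sets_eq_imp_space_eq)
        have ps: "{x \<in> space (N k). linf x \<le> B} \<in> sets (N k)"
          unfolding Np(2) sp by measurable
        have "AE y in N k. linf y \<le> B"
          using AE_distr_iff[OF m1 ps] ae1 d by metis
        moreover have "{y \<in> space (N k). \<not> linf y \<le> B} = A"
          unfolding A_def sp by auto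
        ultimately show ?thesis
          using A Np(2) AE_iff_measurable[of A "N k" "\<lambda>y. linf y \<le> B"] by simp
      qed
      then have "emeasure M0 A = 0"
        using mix_emeasure[OF mix M0(2) Np(2) A] by simp
      moreover have "{y \<in> space M0. \<not> linf y \<le> B} = A"
        unfolding A_def using sets_eq_imp_space_eq[OF M0(2)] by auto
      ultimately have "AE y in M0. linf y \<le> B"
        using A M0(2) AE_iff_measurable[of A M0 "\<lambda>y. linf y \<le> B"] by simp
      then show ?thesis using True by simp
    next
      case False
      have dq: "(\<forall>i<n. integrable (Ps i) (\<lambda>x. linf x powr real_of_ereal q)) \<and>
           ((1 / real n) * (\<Sum>i<n. \<integral>x. linf x powr real_of_ereal q \<partial>Ps i))
              powr (1 / real_of_ereal q) \<le> B"
        using adm(3) False unfolding D_ok_def by simp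
      have "integrable M0 (\<lambda>x. linf x powr real_of_ereal q) \<and> (\<integral>x. linf x powr real_of_ereal q \<partial>M0)
          = (\<Sum>k\<in>{..<n}. 1 / real n * (\<integral>x. linf x powr real_of_ereal q \<partial>N k))"
        using dq NPs by (intro hb) auto
      moreover have "(\<Sum>k\<in>{..<n}. 1 / real n * (\<integral>x. linf x powr real_of_ereal q \<partial>N k))
          = (1 / real n) * (\<Sum>i<n. \<integral>x. linf x powr real_of_ereal q \<partial>Ps i)"
        using NPs by (simp add: sum_distrib_left)
      ultimately show ?thesis using dq False by simp
    qed
    show ?thesis unfolding P_class_def using law mz sec qc by blast
  qed
  have F_eq: "\<And>x :: nat \<Rightarrow> real ^ 'p. Max (range (\<lambda>j. \<bar>(1 / real n) * (\<Sum>i<n. x i $ j)\<bar>)) = nrm (1 / real n) (\<Sum>i\<in>{..<n}. x i)"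
    by (simp add: nrm_def sum_component)
  have PiM_eq: "PiM {..<n} Ps = PiM {..<n} N" by (intro PiM_cong) (auto simp: N_def)
  have "(\<integral>\<^sup>+ x. ennreal (Max (range (\<lambda>j. \<bar>(1 / real n) * (\<Sum>i<n. x i $ j)\<bar>))) \<partial>PiM {..<n} Ps)
      = (\<integral>\<^sup>+ x. ennreal (nrm (1 / real n) (\<Sum>i\<in>{..<n}. x i)) \<partial>PiM {..<n} N)"
    unfolding F_eq PiM_eq ..
  also have "\<dots> \<le> 16 * (\<integral>\<^sup>+ x. ennreal (nrm (1 / real n) (\<Sum>i\<in>{..<n}. x i)) \<partial>PiM {..<n} (\<lambda>_. M0))"
    by (rule main_ineq[OF Np Nmz M0 mix n])
  also have "\<dots> = 16 * (\<integral>\<^sup>+ x. ennreal (Max (range (\<lambda>j. \<bar>(1 / real n) * (\<Sum>i<n. x i $ j)\<bar>))) \<partial>PiM {..<n} (\<lambda>_. M0))"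
    unfolding F_eq ..
  also have "\<dots> \<le> 16 * E_q_star TYPE('p) n q \<sigma> B"
    unfolding E_q_star_def
    by (intro mult_left_mono SUP_upper M0P) auto
  finally show "(\<integral>\<^sup>+ x. ennreal (Max (range (\<lambda>j. \<bar>(1 / real n) * (\<Sum>i<n. x i $ j)\<bar>))) \<partial>PiM {..<n} Ps)
      \<le> 16 * E_q_star TYPE('p) n q \<sigma> B" .
qed

theorem theorem2p1:
  fixes n :: nat and q :: ereal and \<sigma> B :: real
  assumes "n \<ge> 1" and "0 < q" and "0 \<le> \<sigma>" and "\<sigma> \<le> B"
  shows "E_q_star TYPE('p::finite) n q \<sigma> B \<le> E_q TYPE('p) n q \<sigma> B \<and>
         E_q TYPE('p) n q \<sigma> B \<le> 16 * E_q_star TYPE('p) n q \<sigma> B"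
  using part1[OF assms(1)] part2[OF assms(1)] by blast

end
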